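(* For every $z\in\Omega_\theta$ the following hold: (a) $\|W\|_F^2\le \theta/\lambda_2$, $\|V\|_1\le \theta/\lambda_1$ and $\|b_+\|_\infty\le\alpha$, where $b_+=(b)_+$; (b) $\bar z=\mathrm{Proj}_{\Omega_3}(z)$ belongs to $\mathcal{Z}$ and $\mathcal{O}(\bar z)=\mathcal{O}(z)$. Moreover, the set $\mathcal{Z}^*$ of global minimizers of problem (LRP) is nonempty and bounded, and $\mathcal{Z}^*\subset\mathcal{S}$, where $\mathcal{S}$ is the set of global minimizers of problem (RP).
   Context: Let $N,N_0,N_1$ be positive integers, $X=(x_1,\ldots,x_N)\in\mathbb{R}^{N_0\times N}$ a given data matrix, and $\lambda_1,\lambda_2,\beta>0$ given parameters. For a real vector $y$, $(y)_+=\max\{y,0\}$ componentwise; $e$ denotes the all-ones vector of $\mathbb{R}^{N_1}$. For a matrix $Y$, $\|Y\|_F$ is the Frobenius norm and $\|Y\|_1$ the maximum absolute column sum. The variable is $z=(\mathrm{vec}(W)^\top,b^\top,\mathrm{vec}(V)^\top)^\top\in\mathbb{R}^{N_2}$, $N_2=N_0N_1+N_1+N_0+N_1N$, where $W\in\mathbb{R}^{N_1\times N_0}$, $b=(b_1^\top,b_2^\top)^\top$ with $b_1\in\mathbb{R}^{N_1}$, $b_2\in\mathbb{R}^{N_0}$, $V=(v_1,\ldots,v_N)\in\mathbb{R}^{N_1\times N}$, and vec is columnwise vectorization. Define $\mathcal{F}(z)=\frac1N\sum_{n=1}^N\|(W^\top v_n+b_2)_+-x_n\|_2^2$, $\mathcal{R}(z)=\lambda_1\sum_{n=1}^N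 e^\top v_n+\lambda_2\|W\|_F^2$, $\mathcal{P}(z)=\beta\sum_{n=1}^N e^\top(v_n-(Wx_n+b_1)_+)$, and $\mathcal{O}=\mathcal{F}+\mathcal{R}+\mathcal{P}$. Let $\Omega_2=\{z: v_n\ge (Wx_n+b_1)_+,\ n=1,\ldots,N\}$. Fix $\theta>\frac1N\|X\|_F^2$ and set $\alpha=\max\left\{\frac{\theta}{\lambda_1}+\sqrt{\frac{N_1N_0\theta}{\lambda_2}}\|X\|_1,\ \frac{\theta\sqrt{N_1N_0\theta}}{\lambda_1\sqrt{\lambda_2}}+\sqrt{N\theta}+\|X\|_1\right\}$. Let $\Omega_3=\{z:\|b\|_\infty\le\alpha\}$, $\mathcal{Z}=\Omega_2\cap\Omega_3$, $\Omega_\theta=\{z\in\Omega_2:\mathcal{O}(z)\le\theta\}$, and $\mathrm{Proj}_{\Omega_3}$ the Euclidean projection onto the convex set $\Omega_3$. Problem (RP) is: minimize $\mathcal{O}(z)$ subject to $z\in\Omega_2$. Problem (LRP) is: minimize $\mathcal{O}(z)$ subject to $z\in\mathcal{Z}$. *)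

theory Defs
  imports "HOL-Analysis.Analysis"
begin

text \<open>Dimensions are finite index types: 'i (size N0, rows of X), 'h (size N1),
  'n (size N, number of samples).  The variable z = (W, (b1, b2), V) with
  W :: N1 x N0, b1 :: R^N1, b2 :: R^N0, V :: N1 x N (columns v_n).  The norm on this
  product type is the Euclidean norm of the stacked vector z in R^N2.\<close>

type_synonym ('i,'h,'n) var =
  "(real^'i^'h) \<times> ((real^'h) \<times> (real^'i)) \<times> (real^'n^'h)"

definition Wof :: "('i::finite,'h::finite,'n::finite) var \<Rightarrow> real^'i^'h" where
  "Wof z = fst z"
definition b1of :: "('i::finite,'h::finite,'n::finite) var \<Rightarrow> real^'h" where
  "b1of z = fst (fst (snd z))"
definition b2of :: "('i::finite,'h::finite,'n::finite) var \<Rightarrow> real^'i" where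
  "b2of z = snd (fst (snd z))"
definition Vof :: "('i::finite,'h::finite,'n::finite) var \<Rightarrow> real^'n^'h" where
  "Vof z = snd (snd z)"

definition pos :: "real \<Rightarrow> real" where "pos y = max y 0"

definition frob :: "real^'c^'r \<Rightarrow> real" where
  "frob A = sqrt (\<Sum>i\<in>UNIV. \<Sum>j\<in>UNIV. (A$i$j)^2)"
definition norm1 :: "real^'c::finite^'r::finite \<Rightarrow> real" where
  "norm1 A = Max ((\<lambda>j. \<Sum>i\<in>UNIV. \<bar>A$i$j\<bar>) ` UNIV)"

definition binf :: "('i::finite,'h::finite,'n::finite) var \<Rightarrow> real" where
  "binf z = max (Max ((\<lambda>i. \<bar>b1of z $ i\<bar>) ` UNIV)) (Max ((\<lambda>i. \<bar>b2of z $ i\<bar>) ` UNIV))"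
definition bposinf :: "('i::finite,'h::finite,'n::finite) var \<Rightarrow> real" where
  "bposinf z = max (Max ((\<lambda>i. \<bar>pos (b1of z $ i)\<bar>) ` UNIV))
                    (Max ((\<lambda>i. \<bar>pos (b2of z $ i)\<bar>) ` UNIV))"

definition dec :: "('i::finite,'h::finite,'n::finite) var \<Rightarrow> 'n \<Rightarrow> 'i \<Rightarrow> real" where
  "dec z n k = (\<Sum>j\<in>UNIV. Wof z $ j $ k * Vof z $ j $ n) + b2of z $ k"
definition enc :: "real^'n^'i \<Rightarrow> ('i::finite,'h::finite,'n::finite) var \<Rightarrow> 'n \<Rightarrow> 'h \<Rightarrow> real" where
  "enc X z n j = (\<Sum>k\<in>UNIV. Wof z $ j $ k * X $ k $ n) + b1of z $ j"

definition Fobj :: "real^'n^'i \<Rightarrow> ('i::finite,'h::finite,'n::finite) var \<Rightarrow> real" where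
  "Fobj X z = (1 / real CARD('n)) *
     (\<Sum>n\<in>UNIV. \<Sum>k\<in>UNIV. (pos (dec z n k) - X $ k $ n)^2)"
definition Robj :: "real \<Rightarrow> real \<Rightarrow> ('i::finite,'h::finite,'n::finite) var \<Rightarrow> real" where
  "Robj l1 l2 z = l1 * (\<Sum>n\<in>UNIV. \<Sum>j\<in>UNIV. Vof z $ j $ n) + l2 * (frob (Wof z))^2"
definition Pobj :: "real^'n^'i \<Rightarrow> real \<Rightarrow> ('i::finite,'h::finite,'n::finite) var \<Rightarrow> real" where
  "Pobj X beta z = beta * (\<Sum>n\<in>UNIV. \<Sum>j\<in>UNIV. Vof z $ j $ n - pos (enc X z n j))"
definition Oobj :: "real^'n^'i \<Rightarrow> real \<Rightarrow> real \<Rightarrow> real \<Rightarrow> ('i::finite,'h::finite,'n::finite) var \<Rightarrow> real" where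
  "Oobj X l1 l2 beta z = Fobj X z + Robj l1 l2 z + Pobj X beta z"

definition Omega2 :: "real^'n^'i \<Rightarrow> ('i::finite,'h::finite,'n::finite) var set" where
  "Omega2 X = {z. \<forall>n j. Vof z $ j $ n \<ge> pos (enc X z n j)}"
definition Omega3 :: "real \<Rightarrow> ('i::finite,'h::finite,'n::finite) var set" where
  "Omega3 a = {z. binf z \<le> a}"

definition alpha :: "real^'n::finite^'i::finite \<Rightarrow> 'h::finite itself \<Rightarrow> real \<Rightarrow> real \<Rightarrow> real \<Rightarrow> real" where
  "alpha X _ l1 l2 th = max
     (th / l1 + sqrt (real CARD('h) * real CARD('i) * th / l2) * norm1 X)
     (th * sqrt (real CARD('h) * real CARD('i) * th) / (l1 * sqrt l2)
        + sqrt (real CARD('n) * th) + norm1 X)"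

end

theory Submission
  imports Defs
begin

lemma frob_nonneg: "frob A \<ge> 0" unfolding frob_def by (simp add: sum_nonneg)

lemma frob_sq: "(frob A)^2 = (\<Sum>i\<in>UNIV. \<Sum>j\<in>UNIV. (A$i$j)^2)"
  unfolding frob_def by (simp add: sum_nonneg)

lemma entry_le_frob: "\<bar>(A::real^'c::finite^'r::finite)$i$j\<bar> \<le> frob A"
proof -
  have "(A$i$j)^2 \<le> (\<Sum>j\<in>UNIV. (A$i$j)^2)" by (rule member_le_sum) auto
  also have "\<dots> \<le> (\<Sum>i\<in>UNIV. \<Sum>j\<in>UNIV. (A$i$j)^2)"
    by (rule member_le_sum[where f="\<lambda>i. \<Sum>j\<in>UNIV. (A$i$j)^2"]) (auto intro: sum_nonneg)
  finally show ?thesis unfolding frob_def using real_sqrt_le_mono real_sqrt_abs by metis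
qed

lemma col_le_norm1: "(\<Sum>i\<in>UNIV. \<bar>(A::real^'c::finite^'r::finite)$i$j\<bar>) \<le> norm1 A"
  unfolding norm1_def by (rule Max_ge) auto

lemma entry_le_norm1: "\<bar>(A::real^'c::finite^'r::finite)$i$j\<bar> \<le> norm1 A"
proof -
  have "\<bar>A$i$j\<bar> \<le> (\<Sum>i\<in>UNIV. \<bar>A$i$j\<bar>)" by (rule member_le_sum) auto
  then show ?thesis using col_le_norm1[of A j] by linarith
qed

lemma norm1_nonneg: "norm1 (A::real^'c::finite^'r::finite) \<ge> 0"
  using entry_le_norm1[of A] abs_ge_zero order_trans by blast

lemma norm1_le_total:
  assumes "\<And>i j. 0 \<le> (A::real^'c::finite^'r::finite)$i$j"
  shows "norm1 A \<le> (\<Sum>j\<in>UNIV. \<Sum>i\<in>UNIV. A$i$j)"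
  unfolding norm1_def
proof (subst Max_le_iff, simp, simp, intro ballI)
  fix x assume "x \<in> range (\<lambda>j. \<Sum>i\<in>UNIV. \<bar>A $ i $ j\<bar>)"
  then obtain j where x: "x = (\<Sum>i\<in>UNIV. A $ i $ j)" using assms by auto
  show "x \<le> (\<Sum>j\<in>UNIV. \<Sum>i\<in>UNIV. A$i$j)" unfolding x
    by (rule member_le_sum[where f="\<lambda>j. \<Sum>i\<in>UNIV. A$i$j"]) (auto intro: sum_nonneg assms)
qed

lemma encW_bound:
  "\<bar>\<Sum>k\<in>UNIV. (W::real^'i::finite^'h::finite)$j$k * (X::real^'n::finite^'i)$k$n\<bar> \<le> frob W * norm1 X"
proof -
  have "\<bar>\<Sum>k\<in>UNIV. W$j$k * X$k$n\<bar> \<le> (\<Sum>k\<in>UNIV. \<bar>W$j$k\<bar> * \<bar>X$k$n\<bar>)"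
    using sum_abs[of "\<lambda>k. W$j$k * X$k$n" UNIV] by (simp add: abs_mult)
  also have "\<dots> \<le> (\<Sum>k\<in>UNIV. frob W * \<bar>X$k$n\<bar>)"
    by (rule sum_mono) (simp add: mult_right_mono entry_le_frob)
  also have "\<dots> = frob W * (\<Sum>k\<in>UNIV. \<bar>X$k$n\<bar>)" by (simp add: sum_distrib_left)
  also have "\<dots> \<le> frob W * norm1 X"
    by (rule mult_left_mono[OF col_le_norm1 frob_nonneg])
  finally show ?thesis .
qed

lemma decW_bound:
  assumes "\<And>j. 0 \<le> (V::real^'n::finite^'h::finite)$j$n"
  shows "\<bar>\<Sum>j\<in>UNIV. (W::real^'i::finite^'h)$j$k * V$j$n\<bar> \<le> frob W * (\<Sum>j\<in>UNIV. V$j$n)"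
proof -
  have "\<bar>\<Sum>j\<in>UNIV. W$j$k * V$j$n\<bar> \<le> (\<Sum>j\<in>UNIV. \<bar>W$j$k\<bar> * V$j$n)"
    using sum_abs[of "\<lambda>j. W$j$k * V$j$n" UNIV] assms by (simp add: abs_mult)
  also have "\<dots> \<le> (\<Sum>j\<in>UNIV. frob W * V$j$n)"
    by (rule sum_mono) (simp add: mult_right_mono entry_le_frob assms)
  also have "\<dots> = frob W * (\<Sum>j\<in>UNIV. V$j$n)" by (simp add: sum_distrib_left)
  finally show ?thesis .
qed

lemma basic_bounds:
  fixes X :: "real^'n::finite^'i::finite" and z :: "('i::finite,'h::finite,'n::finite) var"
  assumes l1: "l1 > 0" and l2: "l2 > 0" and beta: "beta > 0"
    and zO: "z \<in> Omega2 X" and Ob: "Oobj X l1 l2 beta z \<le> th"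
  shows "\<And>j n. 0 \<le> Vof z $ j $ n" and "(frob (Wof z))^2 \<le> th / l2"
    and "(\<Sum>n\<in>UNIV. \<Sum>j\<in>UNIV. Vof z $ j $ n) \<le> th / l1" and "Fobj X z \<le> th"
proof -
  show V0: "\<And>j n. 0 \<le> Vof z $ j $ n" using zO unfolding Omega2_def pos_def by auto
  have F0: "Fobj X z \<ge> 0" unfolding Fobj_def by (intro mult_nonneg_nonneg sum_nonneg) auto
  have P0: "Pobj X beta z \<ge> 0" using zO beta unfolding Pobj_def Omega2_def
    by (auto intro!: sum_nonneg mult_nonneg_nonneg)
  have SV0: "(\<Sum>n\<in>UNIV. \<Sum>j\<in>UNIV. Vof z $ j $ n) \<ge> 0" using V0 by (auto intro!: sum_nonneg)
  have R1: "l1 * (\<Sum>n\<in>UNIV. \<Sum>j\<in>UNIV. Vof z $ j $ n) \<ge> 0" using SV0 l1 by simp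
  have R2: "l2 * (frob (Wof z))^2 \<ge> 0" using l2 by simp
  have sum: "Fobj X z + l1 * (\<Sum>n\<in>UNIV. \<Sum>j\<in>UNIV. Vof z $ j $ n) + l2 * (frob (Wof z))^2
      + Pobj X beta z \<le> th" using Ob unfolding Oobj_def Robj_def by simp
  show "Fobj X z \<le> th" using sum F0 P0 R1 R2 by linarith
  have "l2 * (frob (Wof z))^2 \<le> th" using sum F0 P0 R1 R2 by linarith
  then show "(frob (Wof z))^2 \<le> th / l2" using l2 by (simp add: pos_le_divide_eq mult.commute)
  have "l1 * (\<Sum>n\<in>UNIV. \<Sum>j\<in>UNIV. Vof z $ j $ n) \<le> th" using sum F0 P0 R1 R2 by linarith
  then show "(\<Sum>n\<in>UNIV. \<Sum>j\<in>UNIV. Vof z $ j $ n) \<le> th / l1" using l1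
    by (simp add: pos_le_divide_eq mult.commute)
qed

lemma O3_iff: "z \<in> Omega3 a \<longleftrightarrow> (\<forall>i. \<bar>b1of z $ i\<bar> \<le> a) \<and> (\<forall>k. \<bar>b2of z $ k\<bar> \<le> a)"
  unfolding Omega3_def binf_def by (simp add: Max_le_iff)

lemma bposinf_iff: "bposinf z \<le> a \<longleftrightarrow> (\<forall>i. \<bar>pos (b1of z $ i)\<bar> \<le> a) \<and> (\<forall>k. \<bar>pos (b2of z $ k)\<bar> \<le> a)"
  unfolding bposinf_def by (simp add: Max_le_iff)

lemma abs_convex: "\<bar>p\<bar> \<le> a \<Longrightarrow> \<bar>q\<bar> \<le> a \<Longrightarrow> 0 \<le> u \<Longrightarrow> 0 \<le> v \<Longrightarrow> u + v = 1 \<Longrightarrow> \<bar>u * p + v * q\<bar> \<le> (a::real)"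
  using convex_bound_le[of p a q u v] convex_bound_le[of "-p" a "-q" u v] by (auto simp: abs_le_iff)

lemma convex_O3: "convex (Omega3 a :: ('i::finite,'h::finite,'n::finite) var set)"
proof (rule convexI)
  fix x y :: "('i,'h,'n) var" and u v :: real
  assume x: "x \<in> Omega3 a" and y: "y \<in> Omega3 a" and uv: "0 \<le> u" "0 \<le> v" "u + v = 1"
  show "u *\<^sub>R x + v *\<^sub>R y \<in> Omega3 a"
    unfolding O3_iff
  proof (intro conjI allI)
    fix i
    have "\<bar>b1of x$i\<bar> \<le> a" "\<bar>b1of y $ i\<bar> \<le> a" using x y by (auto simp add: O3_iff)
    then show "\<bar>b1of (u *\<^sub>R x + v *\<^sub>R y) $ i\<bar> \<le> a" using uv abs_convex
      unfolding b1of_def by simp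
  next
    fix i
    have "\<bar>b2of x$i\<bar> \<le> a" "\<bar>b2of y $ i\<bar> \<le> a" using x y by (auto simp add: O3_iff)
    then show "\<bar>b2of (u *\<^sub>R x + v *\<^sub>R y) $ i\<bar> \<le> a" using uv abs_convex
      unfolding b2of_def by simp
  qed
qed

lemma closed_O3: "closed (Omega3 a :: ('i::finite,'h::finite,'n::finite) var set)"
proof -
  have "Omega3 a = {z::('i,'h,'n) var. \<forall>i. \<bar>fst (fst (snd z)) $ i\<bar> \<le> a} \<inter> {z. \<forall>k. \<bar>snd (fst (snd z)) $ k\<bar> \<le> a}"
    using O3_iff unfolding b1of_def b2of_def by blast
  also have "closed \<dots>"
    by (intro closed_Int closed_Collect_all closed_Collect_le continuous_intros)
  finally show ?thesis .
qed

definition clampv :: "real \<Rightarrow> real^'a::finite \<Rightarrow> real^'a" where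
  "clampv a v = (\<chi> i. max (-a) (min a (v$i)))"

definition pj :: "real \<Rightarrow> ('i::finite,'h::finite,'n::finite) var \<Rightarrow> ('i,'h,'n) var" where
  "pj a z = (Wof z, (clampv a (b1of z), clampv a (b2of z)), Vof z)"

lemma pj_simps [simp]: "Wof (pj a z) = Wof z" "Vof (pj a z) = Vof z"
  "b1of (pj a z) = clampv a (b1of z)" "b2of (pj a z) = clampv a (b2of z)"
  unfolding pj_def Wof_def Vof_def b1of_def b2of_def by simp_all

lemma clamp_dist:
  assumes "\<And>i. \<bar>(c::real^'a::finite)$i\<bar> \<le> a"
  shows "dist b (clampv a b) \<le> dist b c"
  unfolding dist_vec_def
proof (rule L2_set_mono)
  fix i
  show "dist (b$i) (clampv a b $ i) \<le> dist (b$i) (c$i)"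
    using assms[of i] unfolding clampv_def dist_real_def by (auto simp: abs_le_iff)
qed simp

lemma dist_Pair_mono:
  assumes "dist a c \<le> dist a' c'" "dist b d \<le> dist b' d'"
  shows "dist (a,b) (c,d) \<le> dist (a',b') (c',d')"
  unfolding dist_Pair_Pair
  by (intro real_sqrt_le_mono add_mono power_mono assms zero_le_dist)

lemma pj_in: "0 \<le> a \<Longrightarrow> pj a z \<in> Omega3 a"
  unfolding O3_iff by (auto simp: clampv_def)

lemma pj_closest:
  fixes z :: "('i::finite,'h::finite,'n::finite) var"
  assumes "0 \<le> a"
  shows "closest_point (Omega3 a) z = pj a z"
proof (rule closest_point_unique[symmetric, OF convex_O3 closed_O3 pj_in[OF assms]], intro ballI)
  fix y :: "('i,'h,'n) var" assume y: "y \<in> Omega3 a"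
  obtain W b1 b2 V where z: "z = (W, (b1, b2), V)" by (metis prod.collapse)
  obtain W' c1 c2 V' where yy: "y = (W', (c1, c2), V')" by (metis prod.collapse)
  have c1: "\<And>i. \<bar>c1$i\<bar> \<le> a" and c2: "\<And>i. \<bar>c2$i\<bar> \<le> a"
    using y unfolding O3_iff yy b1of_def b2of_def by auto
  have pz: "pj a (W, (b1, b2), V) = (W, (clampv a b1, clampv a b2), V)"
    unfolding pj_def Wof_def Vof_def b1of_def b2of_def by simp
  show "dist z (pj a z) \<le> dist z y" unfolding yy z pz
    by (intro dist_Pair_mono clamp_dist c1 c2) simp_all
qed

lemma omth_props:
  fixes X :: "real^'n::finite^'i::finite" and z :: "('i,'h::finite,'n) var"
  assumes l1: "l1 > 0" and l2: "l2 > 0" and beta: "beta > 0"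
    and zO: "z \<in> Omega2 X" and Ob: "Oobj X l1 l2 beta z \<le> th"
  defines "a \<equiv> alpha X TYPE('h) l1 l2 th"
  shows "(frob (Wof z))^2 \<le> th / l2 \<and> norm1 (Vof z) \<le> th / l1 \<and> bposinf z \<le> a
     \<and> pj a z \<in> Omega2 X \<inter> Omega3 a \<and> Oobj X l1 l2 beta (pj a z) = Oobj X l1 l2 beta z"
proof -
  note bb = basic_bounds[OF l1 l2 beta zO Ob]
  have V0: "\<And>j n. 0 \<le> Vof z $ j $ n" by (rule bb(1))
  have W2: "(frob (Wof z))^2 \<le> th / l2" by (rule bb(2))
  have SV: "(\<Sum>n\<in>UNIV. \<Sum>j\<in>UNIV. Vof z $ j $ n) \<le> th / l1" by (rule bb(3))
  have FF: "Fobj X z \<le> th" by (rule bb(4))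
  have "0 \<le> th / l2" using W2 by (meson order_trans zero_le_power2)
  then have th0: "0 \<le> th" using l2 by (simp add: zero_le_divide_iff)
  define h where "h = real CARD('h)"
  define ii where "ii = real CARD('i)"
  define N where "N = real CARD('n)"
  have h1: "1 \<le> h" unfolding h_def by (simp add: Suc_le_eq)
  have i1: "1 \<le> ii" unfolding ii_def by (simp add: Suc_le_eq)
  have N0: "0 < N" unfolding N_def by simp
  have "1 * 1 \<le> h * ii" by (rule mult_mono) (use h1 i1 in auto)
  then have hi: "1 \<le> h * ii" by simp
  define A1 where "A1 = th / l1 + sqrt (h * ii * th / l2) * norm1 X"
  define A2 where "A2 = th * sqrt (h * ii * th) / (l1 * sqrt l2) + sqrt (N * th) + norm1 X"
  have aA: "A1 \<le> a" "A2 \<le> a" unfolding a_def alpha_def A1_def A2_def h_def ii_def N_def by simp_all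
  have thl1: "0 \<le> th / l1" using th0 l1 by simp
  have nX: "0 \<le> norm1 X" by (rule norm1_nonneg)
  have hith: "0 \<le> h * ii * th / l2" using h1 i1 th0 l2 by simp
  have sA1: "0 \<le> sqrt (h * ii * th / l2) * norm1 X" using hith nX by simp
  have a0: "0 \<le> a" using aA(1) thl1 sA1 unfolding A1_def by linarith
  have fW: "frob (Wof z) \<le> sqrt (th / l2)" using W2 by (rule real_le_rsqrt)
  have "th \<le> h * ii * th" using mult_right_mono[OF hi th0] by simp
  then have "th / l2 \<le> h * ii * th / l2" using l2 by (simp add: divide_right_mono)
  then have sq1: "sqrt (th / l2) \<le> sqrt (h * ii * th / l2)" by simp
  have B1: "\<bar>\<Sum>k\<in>UNIV. Wof z $ j $ k * X $ k $ n\<bar> \<le> sqrt (h * ii * th / l2) * norm1 X" for j n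
    using encW_bound[of "Wof z" j X n] mult_right_mono[OF order_trans[OF fW sq1] nX] by linarith
  have Vcol: "(\<Sum>j\<in>UNIV. Vof z $ j $ n) \<le> th / l1" for n
  proof -
    have "(\<Sum>j\<in>UNIV. Vof z $ j $ n) \<le> (\<Sum>n\<in>UNIV. \<Sum>j\<in>UNIV. Vof z $ j $ n)"
      by (rule member_le_sum[where f="\<lambda>n. \<Sum>j\<in>UNIV. Vof z $ j $ n"]) (auto intro: sum_nonneg V0)
    then show ?thesis using SV by linarith
  qed
  have Vle: "Vof z $ j $ n \<le> th / l1" for j n
  proof -
    have "Vof z $ j $ n \<le> (\<Sum>j\<in>UNIV. Vof z $ j $ n)"
      by (rule member_le_sum) (auto intro: V0)
    then show ?thesis using Vcol[of n] by linarith
  qed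
  have eqB: "sqrt (th / l2) * (th / l1) = (th / (l1 * sqrt l2)) * sqrt th"
    using l1 l2 by (simp add: real_sqrt_divide field_simps)
  have "th \<le> h * ii * th" using mult_right_mono[OF hi th0] by simp
  then have "sqrt th \<le> sqrt (h * ii * th)" by simp
  then have "(th / (l1 * sqrt l2)) * sqrt th \<le> (th / (l1 * sqrt l2)) * sqrt (h * ii * th)"
    using th0 l1 l2 by (intro mult_left_mono) auto
  also have "\<dots> = th * sqrt (h * ii * th) / (l1 * sqrt l2)" by simp
  finally have B2c: "sqrt (th / l2) * (th / l1) \<le> th * sqrt (h * ii * th) / (l1 * sqrt l2)"
    using eqB by simp
  have B2: "\<bar>\<Sum>j\<in>UNIV. Wof z $ j $ k * Vof z $ j $ n\<bar> \<le> th * sqrt (h * ii * th) / (l1 * sqrt l2)" for k n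
  proof -
    have "\<bar>\<Sum>j\<in>UNIV. Wof z $ j $ k * Vof z $ j $ n\<bar> \<le> frob (Wof z) * (\<Sum>j\<in>UNIV. Vof z $ j $ n)"
      by (rule decW_bound) (rule V0)
    also have "\<dots> \<le> sqrt (th / l2) * (th / l1)"
      by (intro mult_mono fW Vcol) (use th0 l2 in \<open>auto intro: sum_nonneg V0\<close>)
    finally show ?thesis using B2c by linarith
  qed
  have Fsum: "(\<Sum>n\<in>UNIV. \<Sum>k\<in>UNIV. (pos (dec z n k) - X $ k $ n)^2) = N * Fobj X z"
    unfolding Fobj_def N_def by simp
  have decb: "pos (dec z n k) \<le> norm1 X + sqrt (N * th)" for n k
  proof -
    have "(pos (dec z n k) - X $ k $ n)^2 \<le> (\<Sum>k\<in>UNIV. (pos (dec z n k) - X $ k $ n)^2)"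
      by (rule member_le_sum) auto
    also have "\<dots> \<le> (\<Sum>n\<in>UNIV. \<Sum>k\<in>UNIV. (pos (dec z n k) - X $ k $ n)^2)"
      by (rule member_le_sum[where f="\<lambda>n. \<Sum>k\<in>UNIV. (pos (dec z n k) - X $ k $ n)^2"]) (auto intro: sum_nonneg)
    also have "\<dots> \<le> N * th" unfolding Fsum using FF N0 by simp
    finally have "\<bar>pos (dec z n k) - X $ k $ n\<bar>^2 \<le> N * th" by simp
    then have "\<bar>pos (dec z n k) - X $ k $ n\<bar> \<le> sqrt (N * th)" by (rule real_le_rsqrt)
    moreover have "\<bar>X $ k $ n\<bar> \<le> norm1 X" by (rule entry_le_norm1)
    ultimately show ?thesis by linarith
  qed
  have encV: "enc X z n j \<le> Vof z $ j $ n" for n j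
    using zO unfolding Omega2_def pos_def by auto
  have b1le: "b1of z $ j \<le> a" for j
  proof -
    have "b1of z $ j = enc X z undefined j - (\<Sum>k\<in>UNIV. Wof z $ j $ k * X $ k $ undefined)"
      unfolding enc_def by simp
    then show ?thesis using encV[of undefined j] Vle[of j undefined] B1[of j undefined] aA(1)
      unfolding A1_def by linarith
  qed
  have b2le: "b2of z $ k \<le> a" for k
  proof -
    have "b2of z $ k = dec z undefined k - (\<Sum>j\<in>UNIV. Wof z $ j $ k * Vof z $ j $ undefined)"
      unfolding dec_def by simp
    moreover have "dec z undefined k \<le> pos (dec z undefined k)" unfolding pos_def by simp
    ultimately show ?thesis using decb[of undefined k] B2[of k undefined] aA(2)
      unfolding A2_def by linarith
  qed
  have bpos: "bposinf z \<le> a" unfolding bposinf_iff pos_def using b1le b2le a0 by auto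
  have encp: "pos (enc X (pj a z) n j) = pos (enc X z n j)" for n j
  proof (cases "b1of z $ j \<ge> -a")
    case True
    then have "clampv a (b1of z) $ j = b1of z $ j" using b1le[of j] unfolding clampv_def by simp
    then show ?thesis unfolding enc_def pj_simps by simp
  next
    case False
    then have c: "clampv a (b1of z) $ j = -a" unfolding clampv_def by simp
    define E where "E = (\<Sum>k\<in>UNIV. Wof z $ j $ k * X $ k $ n)"
    have e1: "enc X (pj a z) n j = E + (-a)" unfolding enc_def pj_simps c E_def by simp
    have e2: "enc X z n j = E + b1of z $ j" unfolding enc_def E_def by simp
    have "sqrt (h * ii * th / l2) * norm1 X \<le> a" using aA(1) thl1 unfolding A1_def by linarith
    then have "E \<le> a" using B1[of j n] unfolding E_def by linarith
    then have "enc X (pj a z) n j \<le> 0" "enc X z n j \<le> 0" using e1 e2 False by linarith+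
    then show ?thesis unfolding pos_def by simp
  qed
  have decp: "pos (dec (pj a z) n k) = pos (dec z n k)" for n k
  proof (cases "b2of z $ k \<ge> -a")
    case True
    then have "clampv a (b2of z) $ k = b2of z $ k" using b2le[of k] unfolding clampv_def by simp
    then show ?thesis unfolding dec_def pj_simps by simp
  next
    case False
    then have c: "clampv a (b2of z) $ k = -a" unfolding clampv_def by simp
    define E where "E = (\<Sum>j\<in>UNIV. Wof z $ j $ k * Vof z $ j $ n)"
    have e1: "dec (pj a z) n k = E + (-a)" unfolding dec_def pj_simps c E_def by simp
    have e2: "dec z n k = E + b2of z $ k" unfolding dec_def E_def by simp
    have "0 \<le> sqrt (N * th)" using N0 th0 by simp
    then have "th * sqrt (h * ii * th) / (l1 * sqrt l2) \<le> a" using aA(2) nX unfolding A2_def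
      by linarith
    then have "E \<le> a" using B2[of k n] unfolding E_def by linarith
    then have "dec (pj a z) n k \<le> 0" "dec z n k \<le> 0" using e1 e2 False by linarith+
    then show ?thesis unfolding pos_def by simp
  qed
  have inO2: "pj a z \<in> Omega2 X" using zO unfolding Omega2_def by (simp add: encp)
  have Oeq: "Oobj X l1 l2 beta (pj a z) = Oobj X l1 l2 beta z"
    unfolding Oobj_def Fobj_def Robj_def Pobj_def by (simp add: encp decp)
  have nV: "norm1 (Vof z) \<le> th / l1" using norm1_le_total[of "Vof z"] V0 SV by fastforce
  show ?thesis using W2 nV bpos inO2 pj_in[OF a0] Oeq by blast
qed

lemma cont_Ob: "continuous_on UNIV (Oobj X l1 l2 beta :: ('i::finite,'h::finite,'n::finite) var \<Rightarrow> real)"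
  unfolding Oobj_def Fobj_def Robj_def Pobj_def frob_def pos_def dec_def enc_def Wof_def Vof_def b1of_def b2of_def
  by (intro continuous_intros)

lemma closed_O2: "closed (Omega2 X :: ('i::finite,'h::finite,'n::finite) var set)"
  unfolding Omega2_def pos_def enc_def Wof_def Vof_def b1of_def b2of_def
  by (intro closed_Collect_all closed_Collect_le continuous_intros)

lemma vec_norm_le:
  assumes "\<And>i. norm ((x::'b::real_normed_vector^'a::finite)$i) \<le> c"
  shows "norm x \<le> real CARD('a) * c"
proof -
  have "norm x = L2_set (\<lambda>i. norm (x$i)) UNIV" by (rule norm_vec_def)
  also have "\<dots> \<le> (\<Sum>i\<in>UNIV. norm (x$i))" by (rule L2_set_le_sum) simp
  also have "\<dots> \<le> (\<Sum>i\<in>(UNIV::'a set). c)" by (rule sum_mono) (rule assms)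
  also have "\<dots> = real CARD('a) * c" by simp
  finally show ?thesis .
qed

lemma var_norm_le:
  "norm (z::('i::finite,'h::finite,'n::finite) var) \<le> norm (Wof z) + (norm (b1of z) + norm (b2of z) + norm (Vof z))"
proof -
  have z: "z = (Wof z, (b1of z, b2of z), Vof z)" unfolding Wof_def b1of_def b2of_def Vof_def by simp
  have "norm z \<le> norm (Wof z) + norm ((b1of z, b2of z), Vof z)" by (subst z) (rule norm_Pair_le)
  also have "norm ((b1of z, b2of z), Vof z) \<le> norm (b1of z, b2of z) + norm (Vof z)" by (rule norm_Pair_le)
  also have "norm (b1of z, b2of z) \<le> norm (b1of z) + norm (b2of z)" by (rule norm_Pair_le)
  finally show ?thesis by simp
qed

theorem theorem2p1:
  fixes X :: "real^'n::finite^'i::finite"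
    and l1 l2 beta th :: real
  assumes l1: "l1 > 0" and l2: "l2 > 0" and beta: "beta > 0"
    and th: "th > (1 / real CARD('n)) * (frob X)^2"
  defines "a \<equiv> alpha X TYPE('h::finite) l1 l2 th"
    and "Ob \<equiv> (Oobj X l1 l2 beta :: ('i,'h,'n) var \<Rightarrow> real)"
  defines "Z \<equiv> Omega2 X \<inter> Omega3 a"
    and "Omth \<equiv> {z \<in> Omega2 X. Ob z \<le> th}"
  defines "Zstar \<equiv> {z \<in> Z. \<forall>y\<in>Z. Ob z \<le> Ob y}"
    and "S \<equiv> {z \<in> Omega2 X. \<forall>y\<in>Omega2 X. Ob z \<le> Ob y}"
  shows "(\<forall>z\<in>Omth.
            (frob (Wof z))^2 \<le> th / l2 \<and> norm1 (Vof z) \<le> th / l1 \<and> bposinf z \<le> a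
          \<and> closest_point (Omega3 a) z \<in> Z \<and> Ob (closest_point (Omega3 a) z) = Ob z)
       \<and> Zstar \<noteq> {} \<and> bounded Zstar \<and> Zstar \<subseteq> S"
proof -
  have N0: "0 < real CARD('n)" by simp
  have "0 \<le> (1 / real CARD('n)) * (frob X)^2" by simp
  then have th0: "0 < th" using th by linarith
  have "0 \<le> th / l1 + sqrt (real CARD('h) * real CARD('i) * th / l2) * norm1 X"
    using th0 l1 l2 norm1_nonneg[of X] by (intro add_nonneg_nonneg mult_nonneg_nonneg) auto
  then have a0: "0 \<le> a" unfolding a_def alpha_def by linarith
  have cl: "\<And>z. closest_point (Omega3 a) z = pj a z" by (rule pj_closest[OF a0])
  have OP: "(frob (Wof z))^2 \<le> th / l2 \<and> norm1 (Vof z) \<le> th / l1 \<and> bposinf z \<le> a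
     \<and> pj a z \<in> Z \<and> Ob (pj a z) = Ob z" if "z \<in> Omth" for z
    using omth_props[OF l1 l2 beta, of z X th] that unfolding Omth_def Ob_def a_def Z_def by blast
  have P1: "\<forall>z\<in>Omth.
            (frob (Wof z))^2 \<le> th / l2 \<and> norm1 (Vof z) \<le> th / l1 \<and> bposinf z \<le> a
          \<and> closest_point (Omega3 a) z \<in> Z \<and> Ob (closest_point (Omega3 a) z) = Ob z"
    using OP unfolding cl by blast
  have Ob0: "Ob 0 = (1 / real CARD('n)) * (frob X)^2"
  proof -
    have "(frob X)^2 = (\<Sum>k\<in>UNIV. \<Sum>n\<in>UNIV. (X$k$n)^2)" by (rule frob_sq)
    also have "\<dots> = (\<Sum>n\<in>UNIV. \<Sum>k\<in>UNIV. (X$k$n)^2)" by (rule sum.swap)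
    finally have fX: "(frob X)^2 = (\<Sum>n\<in>UNIV. \<Sum>k\<in>UNIV. (X$k$n)^2)" .
    show ?thesis unfolding Ob_def Oobj_def Fobj_def Robj_def Pobj_def fX
      by (simp add: dec_def enc_def Wof_def Vof_def b1of_def b2of_def pos_def frob_def)
  qed
  have Ob0th: "Ob 0 < th" using Ob0 th by simp
  have zO2: "0 \<in> Omega2 X" unfolding Omega2_def
    by (simp add: enc_def Wof_def Vof_def b1of_def b2of_def pos_def)
  have zO3: "0 \<in> Omega3 a" unfolding O3_iff using a0 by (simp add: b1of_def b2of_def)
  define K where "K = {z \<in> Z. Ob z \<le> th}"
  have zK: "0 \<in> K" unfolding K_def Z_def using zO2 zO3 Ob0th by simp
  have contO: "continuous_on UNIV Ob" unfolding Ob_def by (rule cont_Ob)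
  have "K = Omega2 X \<inter> Omega3 a \<inter> {z. Ob z \<le> th}" unfolding K_def Z_def by blast
  also have "closed \<dots>"
    by (intro closed_Int closed_O2 closed_O3 closed_Collect_le contO continuous_on_const)
  finally have clK: "closed K" .
  define c where "c = real CARD('h) * (real CARD('i) * sqrt (th / l2)) + (real CARD('h) * a
     + real CARD('i) * a + real CARD('h) * (real CARD('n) * (th / l1)))"
  have nb: "norm z \<le> c" if zK': "z \<in> K" for z
  proof -
    have zOm: "z \<in> Omth" and zO3': "z \<in> Omega3 a" using zK' unfolding K_def Z_def Omth_def by auto
    have W2: "(frob (Wof z))^2 \<le> th / l2" and nV: "norm1 (Vof z) \<le> th / l1" using OP[OF zOm] by auto
    have fW: "frob (Wof z) \<le> sqrt (th / l2)" using W2 by (rule real_le_rsqrt)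
    have nW: "norm (Wof z) \<le> real CARD('h) * (real CARD('i) * sqrt (th / l2))"
    proof (rule vec_norm_le)
      fix j show "norm (Wof z $ j) \<le> real CARD('i) * sqrt (th / l2)"
      proof (rule vec_norm_le)
        fix k show "norm (Wof z $ j $ k) \<le> sqrt (th / l2)"
          using entry_le_frob[of "Wof z" j k] fW by simp
      qed
    qed
    have nVV: "norm (Vof z) \<le> real CARD('h) * (real CARD('n) * (th / l1))"
    proof (rule vec_norm_le)
      fix j show "norm (Vof z $ j) \<le> real CARD('n) * (th / l1)"
      proof (rule vec_norm_le)
        fix k show "norm (Vof z $ j $ k) \<le> th / l1"
          using entry_le_norm1[of "Vof z" j k] nV by simp
      qed
    qed
    have nb1: "norm (b1of z) \<le> real CARD('h) * a"
      by (rule vec_norm_le) (use zO3' in \<open>simp add: O3_iff\<close>)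
    have nb2: "norm (b2of z) \<le> real CARD('i) * a"
      by (rule vec_norm_le) (use zO3' in \<open>simp add: O3_iff\<close>)
    show ?thesis using var_norm_le[of z] nW nVV nb1 nb2 unfolding c_def by linarith
  qed
  have bdK: "bounded K" unfolding bounded_iff using nb by blast
  have cpK: "compact K" using clK bdK by (simp add: compact_eq_bounded_closed)
  obtain zm where zm: "zm \<in> K" "\<forall>y\<in>K. Ob zm \<le> Ob y"
    using continuous_attains_inf[OF cpK _ continuous_on_subset[OF contO]] zK by blast
  have zmS: "zm \<in> Zstar"
  proof -
    have "Ob zm \<le> Ob y" if "y \<in> Z" for y
    proof (cases "Ob y \<le> th")
      case True
      then have "y \<in> K" using that unfolding K_def by simp
      then show ?thesis using zm(2) by blast
    next
      case False then show ?thesis using zm unfolding K_def by auto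
    qed
    then show ?thesis using zm unfolding Zstar_def K_def by auto
  qed
  have ZsK: "Zstar \<subseteq> K"
  proof
    fix z assume "z \<in> Zstar"
    then have "z \<in> Z" "Ob z \<le> Ob 0" using zO2 zO3 unfolding Zstar_def Z_def by auto
    then show "z \<in> K" using Ob0th unfolding K_def by auto
  qed
  have ZsS: "Zstar \<subseteq> S"
  proof
    fix z assume zs: "z \<in> Zstar"
    then have zK2: "z \<in> K" using ZsK by auto
    have "Ob z \<le> Ob y" if y: "y \<in> Omega2 X" for y
    proof (cases "Ob y \<le> th")
      case True
      then have "y \<in> Omth" unfolding Omth_def using y by simp
      then have "pj a y \<in> Z" "Ob (pj a y) = Ob y" using OP by auto
      then show ?thesis using zs unfolding Zstar_def by auto
    next
      case False then show ?thesis using zK2 unfolding K_def by auto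
    qed
    then show "z \<in> S" using zs unfolding S_def Zstar_def Z_def by auto
  qed
  show ?thesis using P1 zmS bounded_subset[OF bdK ZsK] ZsS by blast
qed

end
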